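(* Let $\mathbb{P}_\omega$ be a centred least-squares problem with $r<n$ in simplified form. If $\mathbb{P}_\omega$ admits an essentially perfect solution, then $B$ is indefinite (has both a positive and a negative eigenvalue).
   Context: For real symmetric $n\times n$ $A\neq O$ (positive semidefinite) and $B$, $t,b\in\mathbb{R}^n$, $k\in\mathbb{R}$, problem $\mathbb{P}_\omega$ minimises $L(x)=(x-t)^\top A(x-t)$ over the nonempty set $X=\{x:x^\top Bx+2b^\top x-k=0\}$, with $\underline L=\inf_XL$. Centred least-squares with $r<n$: $t=0$, $A=\operatorname{diag}(I_r,O_{n-r})$, $1\le r<n$. Simplified form: for some $0\le s_0\le n-r$ and nonsingular diagonal $s_0\times s_0$ $\Gamma_0$, $B=\begin{pmatrix}B_{11}&C_{10}&O\\C_{10}^\top&O_{n-r-s_0}&O\\O&O&\Gamma_0\end{pmatrix}$ (block sizes $r,n-r-s_0,s_0$; empty blocks absent). $\mathbb{P}_\omega$ admits an essentially perfect solution if $L(x)>0$ for all $x\in X$ but $\underline L=0$. *)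

theory Defs
  imports Complex_Main "Jordan_Normal_Form.Char_Poly"
begin

definition objL :: "real mat \<Rightarrow> real vec \<Rightarrow> real vec \<Rightarrow> real" where
  "objL A t x = (x - t) \<bullet> (A *\<^sub>v (x - t))"

definition feasX :: "nat \<Rightarrow> real mat \<Rightarrow> real vec \<Rightarrow> real \<Rightarrow> real vec set" where
  "feasX n B b k = {x \<in> carrier_vec n. x \<bullet> (B *\<^sub>v x) + 2 * (b \<bullet> x) - k = 0}"

definition ess_perfect :: "nat \<Rightarrow> real mat \<Rightarrow> real vec \<Rightarrow> real mat \<Rightarrow> real vec \<Rightarrow> real \<Rightarrow> bool" where
  "ess_perfect n A t B b k \<longleftrightarrow>
     (\<forall>x \<in> feasX n B b k. objL A t x > 0) \<and> Inf (objL A t ` feasX n B b k) = 0"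

definition lsqA :: "nat \<Rightarrow> nat \<Rightarrow> real mat" where
  "lsqA n r = mat n n (\<lambda>(i, j). if i = j \<and> i < r then 1 else 0)"

text \<open>Simplified form of B with block sizes r, n-r-s0, s0.\<close>
definition simplified_form :: "nat \<Rightarrow> nat \<Rightarrow> nat \<Rightarrow> real mat \<Rightarrow> bool" where
  "simplified_form n r s0 B \<longleftrightarrow>
     s0 \<le> n - r \<and>
     (\<forall>i<n. \<forall>j<n. r \<le> i \<and> i < n - s0 \<and> r \<le> j \<and> j < n - s0 \<longrightarrow> B $$ (i, j) = 0) \<and>
     (\<forall>i<n. \<forall>j<n. i < n - s0 \<and> n - s0 \<le> j \<longrightarrow> B $$ (i, j) = 0) \<and>
     (\<forall>i<n. \<forall>j<n. n - s0 \<le> i \<and> j < n - s0 \<longrightarrow> B $$ (i, j) = 0) \<and>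
     (\<forall>i<n. \<forall>j<n. n - s0 \<le> i \<and> n - s0 \<le> j \<and> i \<noteq> j \<longrightarrow> B $$ (i, j) = 0) \<and>
     (\<forall>i<n. n - s0 \<le> i \<longrightarrow> B $$ (i, i) \<noteq> 0)"

end

theory Submission
  imports Defs "HOL-Analysis.Function_Topology" "HOL-Analysis.Elementary_Metric_Spaces"
begin

definition qf :: "nat \<Rightarrow> (nat \<Rightarrow> nat \<Rightarrow> real) \<Rightarrow> (nat \<Rightarrow> real) \<Rightarrow> real" where
  "qf n m f = (\<Sum>i<n. \<Sum>j<n. f i * m i j * f j)"

lemma qf_vec:
  assumes "B \<in> carrier_mat n n" "x \<in> carrier_vec n"
  shows "x \<bullet> (B *\<^sub>v x) = qf n (\<lambda>i j. B $$ (i,j)) (\<lambda>i. x $ i)"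
proof -
  have "x \<bullet> (B *\<^sub>v x) = (\<Sum>i<n. x $ i * (\<Sum>j<n. B $$ (i,j) * x $ j))"
    using assms by (simp add: scalar_prod_def atLeast0LessThan row_def)
  also have "\<dots> = qf n (\<lambda>i j. B $$ (i,j)) (\<lambda>i. x $ i)"
    unfolding qf_def by (simp add: sum_distrib_left mult.assoc)
  finally show ?thesis .
qed

lemma qf_cong:
  assumes "\<And>i. i < n \<Longrightarrow> f i = g i"
  shows "qf n m f = qf n m g"
  unfolding qf_def using assms by simp

lemma qf_scale: "qf n m (\<lambda>i. a * f i) = a^2 * qf n m f"
  unfolding qf_def by (simp add: sum_distrib_left power2_eq_square algebra_simps)

lemma qf_expand:
  assumes sym: "\<And>i j. i < n \<Longrightarrow> j < n \<Longrightarrow> m i j = m j i"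
  shows "qf n m (\<lambda>i. v i + s * w i) = qf n m v + 2 * s * (\<Sum>i<n. w i * (\<Sum>j<n. m i j * v j)) + s^2 * qf n m w"
proof -
  have e1: "(\<Sum>i<n. \<Sum>j<n. v i * m i j * w j) = (\<Sum>i<n. \<Sum>j<n. w i * m i j * v j)"
  proof -
    have "(\<Sum>i<n. \<Sum>j<n. v i * m i j * w j) = (\<Sum>j<n. \<Sum>i<n. v i * m i j * w j)"
      by (rule sum.swap)
    also have "\<dots> = (\<Sum>j<n. \<Sum>i<n. w j * m j i * v i)"
      by (intro sum.cong refl) (simp add: sym)
    finally show ?thesis .
  qed
  have "qf n m (\<lambda>i. v i + s * w i) = (\<Sum>i<n. \<Sum>j<n. v i * m i j * v j + s * (v i * m i j * w j) + s * (w i * m i j * v j) + s^2 * (w i * m i j * w j))"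
    unfolding qf_def by (intro sum.cong refl) (simp add: algebra_simps power2_eq_square)
  also have "\<dots> = qf n m v + s * (\<Sum>i<n. \<Sum>j<n. v i * m i j * w j) + s * (\<Sum>i<n. \<Sum>j<n. w i * m i j * v j) + s^2 * qf n m w"
    unfolding qf_def by (simp add: sum.distrib sum_distrib_left)
  also have "\<dots> = qf n m v + 2 * s * (\<Sum>i<n. \<Sum>j<n. w i * m i j * v j) + s^2 * qf n m w"
    using e1 by simp
  also have "(\<Sum>i<n. \<Sum>j<n. w i * m i j * v j) = (\<Sum>i<n. w i * (\<Sum>j<n. m i j * v j))"
    by (simp add: sum_distrib_left mult.assoc)
  finally show ?thesis .
qed

lemma psd_null:
  assumes sym: "\<And>i j. i < n \<Longrightarrow> j < n \<Longrightarrow> m i j = m j i"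
    and psd: "\<And>f. 0 \<le> qf n m f"
    and z: "qf n m v = 0"
  shows "\<forall>i<n. (\<Sum>j<n. m i j * v j) = 0"
proof -
  define w where "w i = (\<Sum>j<n. m i j * v j)" for i
  define N where "N = (\<Sum>i<n. (w i)^2)"
  define c where "c = qf n m w"
  have c0: "c \<ge> 0" using psd c_def by simp
  have key: "0 \<le> - 2 * t * N + t^2 * c" for t
  proof -
    have "0 \<le> qf n m (\<lambda>i. v i + (-t) * w i)" by (rule psd)
    also have "\<dots> = - 2 * t * N + t^2 * c"
      using qf_expand[of n m v "-t" w, OF sym] z by (simp add: N_def c_def power2_eq_square w_def)
    finally show ?thesis .
  qed
  have N0: "N \<ge> 0" unfolding N_def by (simp add: sum_nonneg)
  have "N = 0"
  proof (rule ccontr)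
    assume "N \<noteq> 0" hence Np: "N > 0" using N0 by simp
    define t where "t = N / (c + 1)"
    have tp: "t > 0" using Np c0 t_def by simp
    have "0 \<le> t * (- 2 * N + t * c)" using key[of t] by (simp add: power2_eq_square algebra_simps)
    hence "0 \<le> - 2 * N + t * c" using tp by (simp add: zero_le_mult_iff)
    moreover have "t * c \<le> N" unfolding t_def using Np c0
      by (simp add: field_simps)
    ultimately show False using Np by linarith
  qed
  hence "\<forall>i\<in>{..<n}. (w i)^2 = 0" unfolding N_def
    by (subst sum_nonneg_eq_0_iff[symmetric]) auto
  thus ?thesis unfolding w_def by simp
qed

lemma eig_from_fun:
  assumes B: "B \<in> carrier_mat n n" and nz: "i0 < n" "v i0 \<noteq> 0"
    and ev: "\<And>i. i < n \<Longrightarrow> (\<Sum>j<n. B $$ (i,j) * v j) = lam * v i"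
  shows "eigenvalue B lam"
proof -
  let ?V = "vec n v"
  have "?V \<in> carrier_vec n" by simp
  moreover have "?V \<noteq> 0\<^sub>v n" using nz by (metis index_vec index_zero_vec(1))
  moreover have "B *\<^sub>v ?V = lam \<cdot>\<^sub>v ?V"
  proof (rule eq_vecI)
    fix i assume "i < dim_vec (lam \<cdot>\<^sub>v ?V)"
    hence i: "i < n" by simp
    have "(B *\<^sub>v ?V) $ i = (\<Sum>j<n. B $$ (i,j) * v j)"
      using B i by (simp add: scalar_prod_def atLeast0LessThan row_def)
    also have "\<dots> = (lam \<cdot>\<^sub>v ?V) $ i" using ev[OF i] i by simp
    finally show "(B *\<^sub>v ?V) $ i = (lam \<cdot>\<^sub>v ?V) $ i" .
  qed (use B in simp)
  ultimately show ?thesis unfolding eigenvalue_def eigenvector_def using B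
    by (intro exI[where x="?V"]) simp
qed

lemma pos_eig_fun:
  fixes m :: "nat \<Rightarrow> nat \<Rightarrow> real"
  assumes sym: "\<And>i j. i < n \<Longrightarrow> j < n \<Longrightarrow> m i j = m j i" and pos: "qf n m u > 0"
  shows "\<exists>lam>0. \<exists>v. (\<exists>i0<n. v i0 \<noteq> 0) \<and> (\<forall>i<n. (\<Sum>j<n. m i j * v j) = lam * v i)"
proof -
  define N where "N f = (\<Sum>i<n. (f i)^2)" for f :: "nat \<Rightarrow> real"
  define S where "S = PiE UNIV (\<lambda>i::nat. if i < n then cball (0::real) 1 else {0})"
  define K where "K = S \<inter> {f. N f \<le> 1}"
  have "compactin (product_topology (\<lambda>i. euclidean) UNIV) S"
    unfolding S_def by (subst compactin_PiE) (auto simp: compactin_euclidean_iff)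
  hence cS: "compact S" by (simp add: euclidean_product_topology compactin_euclidean_iff)
  have coord: "continuous_on UNIV (\<lambda>f::nat \<Rightarrow> real. f i)" for i by simp
  have contN: "continuous_on UNIV N" unfolding N_def
    by (intro continuous_intros coord)
  have "closed {f. N f \<le> 1}"
    by (rule closed_Collect_le[OF contN continuous_on_const])
  hence cK: "compact K" unfolding K_def using cS compact_Int_closed by blast
  have K0: "(\<lambda>_. 0) \<in> K" unfolding K_def S_def N_def by auto
  have contq: "continuous_on UNIV (qf n m)" unfolding qf_def
    by (intro continuous_intros coord)
  obtain v where vK: "v \<in> K" and vmax: "\<And>f. f \<in> K \<Longrightarrow> qf n m f \<le> qf n m v"
    using continuous_attains_sup[OF cK _ continuous_on_subset[OF contq]] K0 by blast
  define lam where "lam = qf n m v"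
  have N0: "N f \<ge> 0" for f unfolding N_def by (simp add: sum_nonneg)
  have bound: "qf n m f \<le> lam * N f" for f
  proof (cases "N f = 0")
    case True
    hence "\<forall>i\<in>{..<n}. (f i)^2 = 0" unfolding N_def
      by (subst sum_nonneg_eq_0_iff[symmetric]) auto
    hence "qf n m f = qf n m (\<lambda>_. 0)" by (intro qf_cong) auto
    thus ?thesis using True by (simp add: qf_def)
  next
    case False
    define c where "c = sqrt (N f)"
    have cp: "c > 0" using False N0[of f] c_def by simp
    have c2: "c^2 = N f" using N0[of f] c_def by simp
    define g where "g i = (if i < n then (1/c) * f i else 0)" for i
    have fi: "\<bar>f i\<bar> \<le> c" if "i < n" for i
    proof -
      have "(f i)^2 \<le> N f" unfolding N_def
        by (rule member_le_sum) (use that in auto)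
      hence "sqrt ((f i)^2) \<le> c" unfolding c_def by (rule real_sqrt_le_mono)
      thus ?thesis by simp
    qed
    have "g \<in> S" unfolding S_def g_def using fi cp
      by (auto simp: PiE_iff dist_real_def abs_mult field_simps)
    moreover have "N g = N f / c^2" unfolding N_def g_def
      by (simp add: power_divide sum_divide_distrib)
    hence "N g = 1" using c2 False by simp
    ultimately have "g \<in> K" unfolding K_def by simp
    hence "qf n m g \<le> lam" using vmax lam_def by simp
    moreover have "qf n m g = (1/c)^2 * qf n m f"
      by (subst qf_scale[symmetric]) (rule qf_cong, simp add: g_def)
    ultimately have "(1/c)^2 * qf n m f \<le> lam" by simp
    hence "qf n m f \<le> lam * c^2" using cp by (simp add: field_simps)
    thus ?thesis using c2 by simp
  qed
  have lampos: "lam > 0"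
  proof -
    have "0 < lam * N u" using bound[of u] pos by linarith
    thus ?thesis using N0[of u] by (simp add: zero_less_mult_iff)
  qed
  define M where "M i j = (if i = j then lam else 0) - m i j" for i j
  have rowM: "(\<Sum>j<n. M i j * f j) = lam * f i - (\<Sum>j<n. m i j * f j)" if "i < n" for i f
  proof -
    have "(\<Sum>j<n. M i j * f j) = (\<Sum>j<n. (if i = j then lam * f j else 0) - m i j * f j)"
      by (intro sum.cong refl) (simp add: M_def algebra_simps)
    also have "\<dots> = (\<Sum>j<n. (if i = j then lam * f j else 0)) - (\<Sum>j<n. m i j * f j)"
      by (rule sum_subtractf)
    finally show ?thesis using that by simp
  qed
  have qfM: "qf n M f = lam * N f - qf n m f" for f
  proof -
    have "qf n M f = (\<Sum>i<n. f i * (\<Sum>j<n. M i j * f j))"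
      unfolding qf_def by (simp add: sum_distrib_left mult.assoc)
    also have "\<dots> = (\<Sum>i<n. lam * (f i)^2 - f i * (\<Sum>j<n. m i j * f j))"
      by (intro sum.cong refl) (simp only: lessThan_iff rowM, simp add: power2_eq_square algebra_simps)
    also have "\<dots> = lam * N f - qf n m f"
      unfolding N_def qf_def by (simp add: sum_subtractf sum_distrib_left mult.assoc)
    finally show ?thesis .
  qed
  have symM: "M i j = M j i" if "i < n" "j < n" for i j
    unfolding M_def using sym[OF that] by simp
  have psd: "0 \<le> qf n M f" for f using bound[of f] qfM[of f] by simp
  have "N v \<le> 1" using vK K_def by simp
  hence "qf n M v \<le> 0" using qfM[of v] lampos lam_def
    by (simp add: mult_le_cancel_left1)
  hence "qf n M v = 0" using psd[of v] by linarith
  from psd_null[of n M, OF symM psd this]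
  have ev: "\<forall>i<n. (\<Sum>j<n. m i j * v j) = lam * v i" using rowM by simp
  have "\<exists>i0<n. v i0 \<noteq> 0"
  proof (rule ccontr)
    assume "\<not> ?thesis"
    hence "qf n m v = qf n m (\<lambda>_. 0)" by (intro qf_cong) auto
    thus False using lampos lam_def by (simp add: qf_def)
  qed
  thus ?thesis using ev lampos by blast
qed

lemma qf_one:
  assumes "j < n"
  shows "qf n m (\<lambda>a. if a = j then t else 0) = t * t * m j j"
proof -
  have "qf n m (\<lambda>a. if a = j then t else 0) = (\<Sum>a<n. \<Sum>b<n. if a = j then (if b = j then t * m j j * t else 0) else 0)"
    unfolding qf_def by (intro sum.cong refl) auto
  also have "\<dots> = (\<Sum>a<n. if a = j then t * m j j * t else 0)"
    using assms by (intro sum.cong refl) auto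
  finally show ?thesis using assms by simp
qed

lemma qf_two:
  assumes "i < n" "j < n" "i \<noteq> j"
  shows "qf n m (\<lambda>a. if a = i then t else if a = j then u else 0) = t*t*m i i + t*u*m i j + u*t*m j i + u*u*m j j"
proof -
  let ?f = "\<lambda>a. if a = i then t else if a = j then u else 0"
  have inner: "(\<Sum>b<n. m a b * ?f b) = m a i * t + m a j * u" for a
  proof -
    have "(\<Sum>b<n. m a b * ?f b) = (\<Sum>b<n. (if b = i then m a i * t else 0) + (if b = j then m a j * u else 0))"
      by (intro sum.cong refl) (use assms in auto)
    thus ?thesis using assms by (simp add: sum.distrib)
  qed
  have "qf n m ?f = (\<Sum>a<n. ?f a * (\<Sum>b<n. m a b * ?f b))"
    unfolding qf_def by (simp add: sum_distrib_left mult.assoc)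
  also have "\<dots> = (\<Sum>a<n. (if a = i then t * (m i i * t + m i j * u) else 0) + (if a = j then u * (m j i * t + m j j * u) else 0))"
    unfolding inner by (intro sum.cong refl) (use assms in auto)
  also have "\<dots> = t*t*m i i + t*u*m i j + u*t*m j i + u*u*m j j"
    using assms by (simp add: sum.distrib algebra_simps)
  finally show ?thesis .
qed

lemma qf_split:
  assumes cross: "\<And>i j. i < r \<Longrightarrow> r \<le> j \<Longrightarrow> j < n \<Longrightarrow> m i j = 0"
    and sym: "\<And>i j. i < n \<Longrightarrow> j < n \<Longrightarrow> m i j = m j i"
  shows "qf n m f = qf n m (\<lambda>i. if i < r then f i else 0) + qf n m (\<lambda>i. if i < r then 0 else f i)"
proof -
  have "qf n m f = (\<Sum>i<n. \<Sum>j<n. (if i < r then f i else 0) * m i j * (if j < r then f j else 0)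
        + (if i < r then 0 else f i) * m i j * (if j < r then 0 else f j))"
    unfolding qf_def
  proof (intro sum.cong refl)
    fix i j assume i: "i \<in> {..<n}" and j: "j \<in> {..<n}"
    have "m i j = 0" if "i < r" "\<not> j < r" using cross that j by simp
    moreover have "m i j = 0" if "\<not> i < r" "j < r" using cross[of j i] sym[of i j] that i j by simp
    ultimately show "f i * m i j * f j = (if i < r then f i else 0) * m i j * (if j < r then f j else 0)
        + (if i < r then 0 else f i) * m i j * (if j < r then 0 else f j)"
      by auto
  qed
  thus ?thesis unfolding qf_def by (simp add: sum.distrib)
qed

lemma small_bound:
  fixes m :: "nat \<Rightarrow> nat \<Rightarrow> real"
  assumes ys: "(\<Sum>i<n. (y i)^2) \<le> \<eta>^2" and e0: "0 \<le> \<eta>" and e1: "\<eta> \<le> 1"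
  shows "\<bar>qf n m y + 2*(\<Sum>i<n. bb i * y i)\<bar> \<le> ((\<Sum>i<n. \<Sum>j<n. \<bar>m i j\<bar>) + 2*(\<Sum>i<n. \<bar>bb i\<bar>)) * \<eta>"
proof -
  have yi: "\<bar>y i\<bar> \<le> \<eta>" if "i < n" for i
  proof -
    have "(y i)^2 \<le> (\<Sum>i<n. (y i)^2)" by (rule member_le_sum) (use that in auto)
    hence "\<bar>y i\<bar>^2 \<le> \<eta>^2" using ys by simp
    thus ?thesis using e0 by (rule power2_le_imp_le)
  qed
  have "\<bar>qf n m y\<bar> \<le> (\<Sum>i<n. \<Sum>j<n. \<bar>y i * m i j * y j\<bar>)"
    unfolding qf_def by (rule order_trans[OF sum_abs sum_mono]) (rule sum_abs)
  also have "\<dots> \<le> (\<Sum>i<n. \<Sum>j<n. \<bar>m i j\<bar> * \<eta>)"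
  proof (intro sum_mono)
    fix i j assume i: "i \<in> {..<n}" and j: "j \<in> {..<n}"
    have "\<bar>y i * m i j * y j\<bar> = \<bar>m i j\<bar> * (\<bar>y i\<bar> * \<bar>y j\<bar>)" by (simp add: abs_mult)
    also have "\<dots> \<le> \<bar>m i j\<bar> * (\<eta> * 1)"
      using mult_mono[of "\<bar>y i\<bar>" \<eta> "\<bar>y j\<bar>" 1] yi[of i] yi[of j] i j e0 e1
      by (intro mult_left_mono) auto
    finally show "\<bar>y i * m i j * y j\<bar> \<le> \<bar>m i j\<bar> * \<eta>" by simp
  qed
  also have "\<dots> = (\<Sum>i<n. \<Sum>j<n. \<bar>m i j\<bar>) * \<eta>" by (simp add: sum_distrib_right)
  finally have A: "\<bar>qf n m y\<bar> \<le> (\<Sum>i<n. \<Sum>j<n. \<bar>m i j\<bar>) * \<eta>" .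
  have "\<bar>\<Sum>i<n. bb i * y i\<bar> \<le> (\<Sum>i<n. \<bar>bb i * y i\<bar>)" by (rule sum_abs)
  also have "\<dots> \<le> (\<Sum>i<n. \<bar>bb i\<bar> * \<eta>)"
    using yi by (intro sum_mono) (auto simp: abs_mult intro: mult_left_mono)
  also have "\<dots> = (\<Sum>i<n. \<bar>bb i\<bar>) * \<eta>" by (simp add: sum_distrib_right)
  finally have B: "\<bar>\<Sum>i<n. bb i * y i\<bar> \<le> (\<Sum>i<n. \<bar>bb i\<bar>) * \<eta>" .
  show ?thesis using A B by (simp add: algebra_simps)
qed

lemma H_dich:
  fixes m :: "nat \<Rightarrow> nat \<Rightarrow> real" and bb :: "nat \<Rightarrow> real" and k :: real
  assumes rp: "r \<le> p" "p \<le> n"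
   and Z1: "\<And>i j. r \<le> i \<Longrightarrow> i < p \<Longrightarrow> r \<le> j \<Longrightarrow> j < p \<Longrightarrow> m i j = 0"
   and Z2: "\<And>i j. i < p \<Longrightarrow> p \<le> j \<Longrightarrow> j < n \<Longrightarrow> m i j = 0"
   and Z3: "\<And>i j. p \<le> i \<Longrightarrow> i < n \<Longrightarrow> j < p \<Longrightarrow> m i j = 0"
   and Z4: "\<And>i j. p \<le> i \<Longrightarrow> i < n \<Longrightarrow> p \<le> j \<Longrightarrow> j < n \<Longrightarrow> i \<noteq> j \<Longrightarrow> m i j = 0"
   and G: "\<And>i. p \<le> i \<Longrightarrow> i < n \<Longrightarrow> m i i \<noteq> 0"
  shows "(\<exists>z. (\<forall>i<r. z i = 0) \<and> qf n m z + 2*(\<Sum>i<n. bb i * z i) - k = 0) \<or>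
         (\<exists>c>0. \<forall>z. (\<forall>i<r. z i = 0) \<longrightarrow> c \<le> \<bar>qf n m z + 2*(\<Sum>i<n. bb i * z i) - k\<bar>)"
proof (cases "\<exists>j. r \<le> j \<and> j < p \<and> bb j \<noteq> 0")
  case True
  then obtain j where j: "r \<le> j" "j < p" "bb j \<noteq> 0" by blast
  define t where "t = k / (2 * bb j)"
  define z where "z a = (if a = j then t else 0)" for a
  have jn: "j < n" using j rp by simp
  have "qf n m z = t * t * m j j" unfolding z_def using qf_one[OF jn] by simp
  hence q: "qf n m z = 0" using Z1[of j j] j by simp
  have "(\<Sum>i<n. bb i * z i) = (\<Sum>i<n. if i = j then bb j * t else 0)"
    unfolding z_def by (intro sum.cong refl) auto
  hence l: "(\<Sum>i<n. bb i * z i) = k / 2" using jn j unfolding t_def by simp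
  have "\<forall>i<r. z i = 0" unfolding z_def using j by auto
  thus ?thesis using q l by auto
next
  case False
  hence b0: "\<And>j. r \<le> j \<Longrightarrow> j < p \<Longrightarrow> bb j = 0" by blast
  define W where "W z = (\<Sum>i<n. if p \<le> i then m i i * (z i + bb i / m i i)^2 else 0)" for z
  define M where "M = - k - (\<Sum>i<n. if p \<le> i then (bb i)^2 / m i i else 0)"
  have Hform: "qf n m z + 2*(\<Sum>i<n. bb i * z i) - k = M + W z" if z0: "\<forall>i<r. z i = 0" for z
  proof -
    have "qf n m z = (\<Sum>i<n. \<Sum>j<n. if j = i then (if p \<le> i then m i i * (z i)^2 else 0) else 0)"
      unfolding qf_def
    proof (intro sum.cong refl)
      fix i j assume i: "i \<in> {..<n}" and j: "j \<in> {..<n}"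
      show "z i * m i j * z j = (if j = i then (if p \<le> i then m i i * (z i)^2 else 0) else 0)"
      proof (cases "i < r \<or> j < r")
        case True
        thus ?thesis using z0 Z1[of i i] rp by (auto simp: power2_eq_square)
      next
        case False
        hence ir: "r \<le> i" "r \<le> j" by auto
        show ?thesis
          using Z1[OF ir(1) _ ir(2)] Z2[of i j] Z3[of i j] Z4[of i j] i j
          by (cases "i < p"; cases "j < p"; auto simp: power2_eq_square)
      qed
    qed
    hence q: "qf n m z = (\<Sum>i<n. if p \<le> i then m i i * (z i)^2 else 0)" by simp
    have l: "(\<Sum>i<n. bb i * z i) = (\<Sum>i<n. if p \<le> i then bb i * z i else 0)"
    proof (intro sum.cong refl)
      fix i assume "i \<in> {..<n}"
      show "bb i * z i = (if p \<le> i then bb i * z i else 0)"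
        using z0 b0[of i] by (cases "i < r") auto
    qed
    have e: "(if p \<le> i then m i i * (z i)^2 else 0) + 2 * (if p \<le> i then bb i * z i else 0) =
        (if p \<le> i then m i i * (z i + bb i / m i i)^2 else 0) - (if p \<le> i then (bb i)^2 / m i i else 0)"
      if "i < n" for i
      using G[of i] that by (auto simp: field_simps power2_eq_square)
    have "qf n m z + 2*(\<Sum>i<n. bb i * z i) = (\<Sum>i<n. (if p \<le> i then m i i * (z i)^2 else 0) + 2 * (if p \<le> i then bb i * z i else 0))"
      unfolding q l by (simp add: sum.distrib sum_distrib_left)
    also have "\<dots> = (\<Sum>i<n. (if p \<le> i then m i i * (z i + bb i / m i i)^2 else 0) - (if p \<le> i then (bb i)^2 / m i i else 0))"
      using e by (intro sum.cong refl) auto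
    also have "\<dots> = W z - (\<Sum>i<n. if p \<le> i then (bb i)^2 / m i i else 0)"
      unfolding W_def by (rule sum_subtractf)
    finally show ?thesis unfolding M_def by simp
  qed
  define z0 where "z0 a = (if p \<le> a then - bb a / m a a else 0)" for a
  have z0r: "\<forall>i<r. z0 i = 0" unfolding z0_def using rp by auto
  have Wz0: "W z0 = 0" unfolding W_def z0_def by (intro sum.neutral) auto
  show ?thesis
  proof (cases "M = 0")
    case True
    thus ?thesis using Hform[OF z0r] Wz0 z0r by auto
  next
    case Mne: False
    show ?thesis
    proof (cases "\<exists>q. p \<le> q \<and> q < n \<and> m q q * M \<le> 0")
      case True
      then obtain q where q: "p \<le> q" "q < n" "m q q * M \<le> 0" by blast
      have mq: "m q q \<noteq> 0" using G q by simp
      have arg: "- M / m q q \<ge> 0" using q(3) mq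
        by (auto simp: mult_le_0_iff divide_nonpos_pos divide_nonneg_neg)
      define s where "s = sqrt (- M / m q q)"
      have s2: "m q q * s^2 = - M" unfolding s_def using arg mq by simp
      define z where "z a = z0 a + (if a = q then s else 0)" for a
      have zr: "\<forall>i<r. z i = 0" unfolding z_def using z0r q rp by auto
      have "W z = (\<Sum>i<n. if i = q then m q q * s^2 else 0)"
        unfolding W_def
      proof (intro sum.cong refl)
        fix i assume i: "i \<in> {..<n}"
        show "(if p \<le> i then m i i * (z i + bb i / m i i)^2 else 0) = (if i = q then m q q * s^2 else 0)"
          using q unfolding z_def z0_def by auto
      qed
      hence "W z = - M" using q s2 by simp
      thus ?thesis using Hform[OF zr] zr by auto
    next
      case False
      hence pos: "\<And>q. p \<le> q \<Longrightarrow> q < n \<Longrightarrow> m q q * M > 0" by force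
      have "\<forall>z::nat\<Rightarrow>real. (\<forall>i<r. z i = 0) \<longrightarrow> \<bar>M\<bar> \<le> \<bar>qf n m z + 2*(\<Sum>i<n. bb i * z i) - k\<bar>"
      proof (intro allI impI)
        fix z :: "nat \<Rightarrow> real" assume zr: "\<forall>i<r. z i = 0"
        have "M * W z = (\<Sum>i<n. if p \<le> i then (m i i * M) * (z i + bb i / m i i)^2 else 0)"
          unfolding W_def sum_distrib_left by (intro sum.cong refl) (simp add: algebra_simps)
        also have "\<dots> \<ge> 0" using pos by (intro sum_nonneg) (force intro: mult_nonneg_nonneg order.strict_implies_order)
        finally have mw: "M * W z \<ge> 0" .
        have "M^2 \<le> (M + W z)^2" using mw by (simp add: power2_sum)
        hence "\<bar>M\<bar> \<le> \<bar>M + W z\<bar>" by (simp add: abs_le_square_iff)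
        thus "\<bar>M\<bar> \<le> \<bar>qf n m z + 2*(\<Sum>i<n. bb i * z i) - k\<bar>" using Hform[OF zr] by simp
      qed
      thus ?thesis using Mne by (intro disjI2 exI[of _ "\<bar>M\<bar>"]) auto
    qed
  qed
qed

lemma objL_eq:
  assumes x: "x \<in> carrier_vec n" and rn: "r \<le> n"
  shows "objL (lsqA n r) (0\<^sub>v n) x = (\<Sum>i<n. if i < r then (x $ i)^2 else 0)"
proof -
  have A: "lsqA n r \<in> carrier_mat n n" unfolding lsqA_def by simp
  have "objL (lsqA n r) (0\<^sub>v n) x = qf n (\<lambda>i j. lsqA n r $$ (i,j)) (\<lambda>i. x $ i)"
    unfolding objL_def using x qf_vec[OF A x] by simp
  also have "\<dots> = (\<Sum>i<n. \<Sum>j<n. if j = i then (if i < r then (x $ i)^2 else 0) else 0)"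
    unfolding qf_def lsqA_def by (intro sum.cong refl) (auto simp: power2_eq_square)
  finally show ?thesis by simp
qed

lemma feas_char:
  assumes B: "B \<in> carrier_mat n n" and b: "b \<in> carrier_vec n" and x: "x \<in> carrier_vec n"
  shows "x \<in> feasX n B b k \<longleftrightarrow> qf n (\<lambda>i j. B $$ (i,j)) (\<lambda>i. x $ i) + 2 * (\<Sum>i<n. b $ i * x $ i) - k = 0"
proof -
  have "b \<bullet> x = (\<Sum>i<n. b $ i * x $ i)" using x by (simp add: scalar_prod_def atLeast0LessThan)
  thus ?thesis unfolding feasX_def using x qf_vec[OF B x] by simp
qed

theorem corollary5p1:
  fixes n r s0 :: nat and B :: "real mat" and b :: "real vec" and k :: real
  assumes "1 \<le> r" and "r < n"
    and "B \<in> carrier_mat n n" and "transpose_mat B = B"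
    and "b \<in> carrier_vec n"
    and "simplified_form n r s0 B"
    and "feasX n B b k \<noteq> {}"
    and "ess_perfect n (lsqA n r) (0\<^sub>v n) B b k"
  shows "(\<exists>p>0. eigenvalue B p) \<and> (\<exists>q<0. eigenvalue B q)"
proof -
  define m where "m i j = B $$ (i,j)" for i j
  define p where "p = n - s0"
  define bb where "bb i = b $ i" for i
  define L where "L x = objL (lsqA n r) (0\<^sub>v n) x" for x
  define X where "X = feasX n B b k"
  have Bc: "B \<in> carrier_mat n n" by fact
  have sym: "m i j = m j i" if "i < n" "j < n" for i j
  proof -
    have "transpose_mat B $$ (i,j) = B $$ (j,i)" using Bc that by simp
    thus ?thesis using assms(4) unfolding m_def by simp
  qed
  from assms(6)[unfolded simplified_form_def] have
    s0: "s0 \<le> n - r" and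
    SF1: "\<forall>i<n. \<forall>j<n. r \<le> i \<and> i < n - s0 \<and> r \<le> j \<and> j < n - s0 \<longrightarrow> B $$ (i, j) = 0" and
    SF2: "\<forall>i<n. \<forall>j<n. i < n - s0 \<and> n - s0 \<le> j \<longrightarrow> B $$ (i, j) = 0" and
    SF3: "\<forall>i<n. \<forall>j<n. n - s0 \<le> i \<and> j < n - s0 \<longrightarrow> B $$ (i, j) = 0" and
    SF4: "\<forall>i<n. \<forall>j<n. n - s0 \<le> i \<and> n - s0 \<le> j \<and> i \<noteq> j \<longrightarrow> B $$ (i, j) = 0" and
    SF5: "\<forall>i<n. n - s0 \<le> i \<longrightarrow> B $$ (i, i) \<noteq> 0"
    by blast+
  have rp: "r \<le> p" "p \<le> n" unfolding p_def using s0 assms(2) by auto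
  have Z1: "\<And>i j. r \<le> i \<Longrightarrow> i < p \<Longrightarrow> r \<le> j \<Longrightarrow> j < p \<Longrightarrow> m i j = 0"
    using SF1 rp unfolding m_def p_def by auto
  have Z2: "\<And>i j. i < p \<Longrightarrow> p \<le> j \<Longrightarrow> j < n \<Longrightarrow> m i j = 0"
    using SF2 rp unfolding m_def p_def by auto
  have Z3: "\<And>i j. p \<le> i \<Longrightarrow> i < n \<Longrightarrow> j < p \<Longrightarrow> m i j = 0"
    using SF3 rp unfolding m_def p_def by auto
  have Z4: "\<And>i j. p \<le> i \<Longrightarrow> i < n \<Longrightarrow> p \<le> j \<Longrightarrow> j < n \<Longrightarrow> i \<noteq> j \<Longrightarrow> m i j = 0"
    using SF4 unfolding m_def p_def by auto
  have G: "\<And>i. p \<le> i \<Longrightarrow> i < n \<Longrightarrow> m i i \<noteq> 0"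
    using SF5 unfolding m_def p_def by auto
  have Lpos: "\<And>x. x \<in> X \<Longrightarrow> L x > 0" and Linf: "Inf (L ` X) = 0"
    using assms(8) unfolding ess_perfect_def L_def X_def by auto
  have Xne: "X \<noteq> {}" using assms(7) X_def by simp
  have Xc: "\<And>x. x \<in> X \<Longrightarrow> x \<in> carrier_vec n" unfolding X_def feasX_def by auto
  have feas: "x \<in> X \<longleftrightarrow> qf n m (\<lambda>i. x $ i) + 2 * (\<Sum>i<n. bb i * x $ i) - k = 0"
    if "x \<in> carrier_vec n" for x
    using feas_char[OF Bc assms(5) that] unfolding X_def m_def bb_def by simp
  have claimC: "\<exists>i j. i < r \<and> r \<le> j \<and> j < p \<and> m i j \<noteq> 0"
  proof (rule ccontr)
    assume nC: "\<not> ?thesis"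
    have cross: "\<And>i j. i < r \<Longrightarrow> r \<le> j \<Longrightarrow> j < n \<Longrightarrow> m i j = 0"
    proof -
      fix i j assume ij: "i < r" "r \<le> j" "j < n"
      show "m i j = 0"
      proof (cases "j < p")
        case True thus ?thesis using nC ij by blast
      next
        case False thus ?thesis using Z2[of i j] ij rp by simp
      qed
    qed
    from H_dich[where r=r and p=p and n=n and m=m and bb=bb and k=k, OF rp Z1 Z2 Z3 Z4 G]
    consider (zero) z where "\<forall>i<r. z i = 0" "qf n m z + 2*(\<Sum>i<n. bb i * z i) - k = 0"
      | (bnd) c where "c > 0" "\<forall>z. (\<forall>i<r. z i = 0) \<longrightarrow> c \<le> \<bar>qf n m z + 2*(\<Sum>i<n. bb i * z i) - k\<bar>"
      by blast
    then show False
    proof cases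
      case zero
      define V where "V = vec n z"
      have Vc: "V \<in> carrier_vec n" unfolding V_def by simp
      have "qf n m (\<lambda>i. V $ i) = qf n m z" unfolding V_def by (intro qf_cong) simp
      moreover have "(\<Sum>i<n. bb i * V $ i) = (\<Sum>i<n. bb i * z i)" unfolding V_def by simp
      ultimately have "V \<in> X" using feas[OF Vc] zero by simp
      moreover have "L V = 0"
      proof -
        have "L V = (\<Sum>i<n. if i < r then (V $ i)^2 else 0)"
          unfolding L_def using objL_eq[OF Vc, of r] rp by simp
        also have "\<dots> = 0" using zero(1) unfolding V_def by (intro sum.neutral) auto
        finally show ?thesis .
      qed
      ultimately show False using Lpos by fastforce
    next
      case bnd
      define K where "K = (\<Sum>i<n. \<Sum>j<n. \<bar>m i j\<bar>) + 2*(\<Sum>i<n. \<bar>bb i\<bar>)"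
      have K0: "K \<ge> 0" unfolding K_def by (simp add: sum_nonneg)
      define eps where "eps = min 1 ((c / (K + 1))^2)"
      have eps0: "eps > 0" unfolding eps_def using bnd K0 by simp
      have bdd: "bdd_below (L ` X)" using Lpos by (intro bdd_belowI[of _ 0]) (auto intro: less_imp_le)
      have "Inf (L ` X) < eps" using Linf eps0 by simp
      then obtain x where xX: "x \<in> X" and Lx: "L x < eps"
        using cInf_less_iff[of "L ` X" eps] Xne bdd by auto
      have xc: "x \<in> carrier_vec n" using Xc xX .
      define f where "f = (\<lambda>i. x $ i)"
      define y where "y i = (if i < r then f i else 0)" for i
      define z where "z i = (if i < r then 0 else f i)" for i
      have zr: "\<forall>i<r. z i = 0" unfolding z_def by simp
      have F0: "qf n m f + 2 * (\<Sum>i<n. bb i * f i) - k = 0" using feas[OF xc] xX unfolding f_def by simp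
      have qs: "qf n m f = qf n m y + qf n m z" unfolding y_def z_def
        by (rule qf_split[OF cross sym])
      have ls: "(\<Sum>i<n. bb i * f i) = (\<Sum>i<n. bb i * y i) + (\<Sum>i<n. bb i * z i)"
      proof -
        have "(\<Sum>i<n. bb i * f i) = (\<Sum>i<n. bb i * y i + bb i * z i)"
          by (intro sum.cong refl) (auto simp: y_def z_def)
        thus ?thesis by (simp add: sum.distrib)
      qed
      have Hz: "qf n m z + 2*(\<Sum>i<n. bb i * z i) - k = - (qf n m y + 2*(\<Sum>i<n. bb i * y i))"
        using F0 qs ls by (simp add: algebra_simps)
      have cle0: "c \<le> \<bar>qf n m z + 2*(\<Sum>i<n. bb i * z i) - k\<bar>" using bnd(2) zr by blast
      have cle: "c \<le> \<bar>qf n m y + 2*(\<Sum>i<n. bb i * y i)\<bar>" using cle0 Hz by simp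
      have "L x = (\<Sum>i<n. if i < r then (x $ i)^2 else 0)"
        unfolding L_def using objL_eq[OF xc, of r] rp by simp
      also have "\<dots> = (\<Sum>i<n. (y i)^2)"
        by (intro sum.cong refl) (auto simp: y_def f_def)
      finally have Ly: "L x = (\<Sum>i<n. (y i)^2)" .
      have L0: "L x \<ge> 0" using Lpos xX by (simp add: less_imp_le)
      define eta where "eta = sqrt (L x)"
      have eta0: "eta \<ge> 0" unfolding eta_def using L0 by simp
      have eta2: "eta^2 = L x" unfolding eta_def using L0 by simp
      have "eta^2 < 1" using eta2 Lx eps_def by simp
      hence "eta < 1" using power2_less_imp_less[of eta 1] by simp
      hence eta1: "eta \<le> 1" by simp
      have "eta^2 < (c / (K + 1))^2" using eta2 Lx eps_def by simp
      hence etac: "eta < c / (K + 1)"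
        by (rule power2_less_imp_less) (use bnd(1) K0 in simp)
      have "\<bar>qf n m y + 2*(\<Sum>i<n. bb i * y i)\<bar> \<le> K * eta"
      proof -
        have ys: "(\<Sum>i<n. (y i)^2) \<le> eta^2" using Ly eta2 by simp
        show ?thesis unfolding K_def by (rule small_bound[OF ys eta0 eta1])
      qed
      also have "\<dots> \<le> K * (c / (K + 1))" using mult_left_mono[OF less_imp_le[OF etac] K0] by simp
      also have "\<dots> < c" using K0 bnd(1) by (simp add: field_simps)
      finally show False using cle by simp
    qed
  qed
  then obtain i j where ij: "i < r" "r \<le> j" "j < p" "m i j \<noteq> 0" by blast
  have ijn: "i < n" "j < n" "i \<noteq> j" using ij rp by auto
  have mjj: "m j j = 0" using Z1[of j j] ij by simp
  have mji: "m j i = m i j" using sym ijn by simp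
  define d where "d = \<bar>m i i\<bar> + 1"
  have d0: "d > 0" unfolding d_def by simp
  have qt: "qf n m (\<lambda>a. if a = i then t else if a = j then 1 else 0) = t * (t * m i i + 2 * m i j)" for t
  proof -
    have "qf n m (\<lambda>a. if a = i then t else if a = j then 1 else 0) = t*t*m i i + t*1*m i j + 1*t*m j i + 1*1*m j j"
      by (rule qf_two[OF ijn])
    also have "\<dots> = t * (t * m i i + 2 * m i j)" unfolding mjj mji by (simp add: algebra_simps)
    finally show ?thesis .
  qed
  have dlt: "\<bar>m i i\<bar> < d" unfolding d_def by simp
  have bnd1: "\<bar>m i i / d\<bar> < 1" using dlt d0 by (simp add: abs_divide)
  have bl: "-1 < m i i / d" "m i i / d < 1" using bnd1 unfolding abs_less_iff by linarith+
  have Ap: "(m i j)^2 / d > 0" using ij(4) d0 by simp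
  have B1: "m i i / d + 2 > 0" "2 - m i i / d > 0" using bl by linarith+
  have posq: "\<exists>u. qf n m u > 0"
  proof -
    define t where "t = m i j / d"
    have "t * m i i + 2 * m i j = m i j * (m i i / d + 2)" unfolding t_def by (simp add: algebra_simps)
    hence "t * (t * m i i + 2 * m i j) = (m i j)^2 / d * (m i i / d + 2)"
      unfolding t_def by (simp add: power2_eq_square)
    also have "\<dots> > 0" by (rule mult_pos_pos[OF Ap B1(1)])
    finally have "qf n m (\<lambda>a. if a = i then t else if a = j then 1 else 0) > 0" using qt by simp
    thus ?thesis by blast
  qed
  have negq: "\<exists>u. qf n m u < 0"
  proof -
    define t where "t = - m i j / d"
    have "t * m i i + 2 * m i j = m i j * (2 - m i i / d)" unfolding t_def by (simp add: algebra_simps)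
    hence "t * (t * m i i + 2 * m i j) = - ((m i j)^2 / d * (2 - m i i / d))"
      unfolding t_def by (simp add: power2_eq_square)
    also have "\<dots> < 0" using mult_pos_pos[OF Ap B1(2)] by simp
    finally have "qf n m (\<lambda>a. if a = i then t else if a = j then 1 else 0) < 0" using qt by simp
    thus ?thesis by blast
  qed
  have P: "\<exists>p>0. eigenvalue B p"
  proof -
    from posq obtain u where "qf n m u > 0" by blast
    from pos_eig_fun[OF sym this] obtain lam v i0 where
      "lam > 0" "i0 < n" "v i0 \<noteq> 0" "\<forall>i<n. (\<Sum>j<n. m i j * v j) = lam * v i" by blast
    thus ?thesis using eig_from_fun[OF Bc, of i0 v lam] unfolding m_def by blast
  qed
  have N: "\<exists>q<0. eigenvalue B q"
  proof -
    from negq obtain u where "qf n m u < 0" by blast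
    hence "qf n (\<lambda>i j. - m i j) u > 0" unfolding qf_def by (simp add: sum_negf)
    moreover have symN: "\<And>i j. i < n \<Longrightarrow> j < n \<Longrightarrow> - m i j = - m j i" using sym by simp
    ultimately obtain lam v i0 where
      "lam > 0" "i0 < n" "v i0 \<noteq> 0" "\<forall>i<n. (\<Sum>j<n. - m i j * v j) = lam * v i"
      using pos_eig_fun[of n "\<lambda>i j. - m i j"] by blast
    hence "\<forall>i<n. (\<Sum>j<n. B $$ (i,j) * v j) = (- lam) * v i" unfolding m_def by (simp add: sum_negf minus_equation_iff)
    thus ?thesis using eig_from_fun[OF Bc, of i0 v "- lam"] \<open>lam > 0\<close> \<open>i0 < n\<close> \<open>v i0 \<noteq> 0\<close>
      by (intro exI[of _ "- lam"]) auto
  qed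
  show ?thesis using P N by blast
qed

end
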